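(* Let $a\in\mathbb{N}$ and $X=\overline{a^{\mathbb{N}}}$ (closure in the $2$-adic topology on $\mathbb{N}\setminus2\mathbb{N}$). (1) If $a\in1+4\mathbb{N}$, then $X=1+2^{n(X)-2}\mathbb{N}_0$. (2) If $a\in3+4\mathbb{N}$, then $X=(1+2^{n(X)-1}\mathbb{N}_0)\cup(-1+2^{n(X)-2}+2^{n(X)-1}\mathbb{N}_0)$. In both cases $i(X)=2^{n(X)-3}$.
   Context: $\mathbb{N}=\{1,2,\dots\}$, $\mathbb{N}_0=\{0\}\cup\mathbb{N}$, $x^{\mathbb{N}}=\{x^k:k\in\mathbb{N}\}$, $c+d\mathbb{N}=\{c+dk:k\in\mathbb{N}\}$, $c+d\mathbb{N}_0=\{c+dk:k\in\mathbb{N}_0\}$. The $2$-adic topology on $\mathbb{N}\setminus2\mathbb{N}$ is generated by the sets $x+2^m\mathbb{N}_0$ ($x,m\in\mathbb{N}$). $\mathbb{Z}_{2^m}^\times$ is the unit group of $\mathbb{Z}/2^m\mathbb{Z}$, $\pi_m:\mathbb{N}\to\mathbb{Z}/2^m\mathbb{Z}$, $x\mapsto x+2^m\mathbb{Z}$. For $X$ of the form $\overline{b^{\mathbb{N}}}$ with $b$ odd, $b\neq 1$: $n(X)=\min\{m\in\mathbb{N}:X=\pi_m^{-1}(\pi_m(X)),\ |\pi_m(X)|\ge3\}$, and $i(X)$ is the index of the subgroup $\pi_{n(X)}(X)$ in $\mathbb{Z}_{2^{n(X)}}^\times$. *)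

theory Defs
  imports Main
begin

text \<open>The natural numbers of the paper are N = {1,2,...}; we use Isabelle's nat
  and add the positivity constraints explicitly.\<close>

text \<open>Closure of S in the 2-adic topology on the odd positive integers, whose
  basis consists of the sets x + 2^m N_0 (x, m in N), intersected with the odd numbers:
  y is in the closure iff y is odd and every basic open set containing y meets S.\<close>
definition adic_closure :: "nat set \<Rightarrow> nat set" where
  "adic_closure S = {y. y \<ge> 1 \<and> odd y \<and>
     (\<forall>x m. x \<ge> 1 \<longrightarrow> m \<ge> 1 \<longrightarrow> y \<in> {x + 2^m * k | k. True} \<longrightarrow>
        (\<exists>s\<in>S. s \<in> {x + 2^m * k | k. True}))}"

definition pi2 :: "nat \<Rightarrow> nat \<Rightarrow> nat" where
  "pi2 m x = x mod 2^m"

definition pi2_sat :: "nat \<Rightarrow> nat set \<Rightarrow> nat set" where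
  "pi2_sat m X = {y. y \<ge> 1 \<and> pi2 m y \<in> pi2 m ` X}"

definition nX :: "nat set \<Rightarrow> nat" where
  "nX X = (LEAST m. m \<ge> 1 \<and> X = pi2_sat m X \<and> card (pi2 m ` X) \<ge> 3)"

definition units2 :: "nat \<Rightarrow> nat set" where
  "units2 m = {u. u < 2^m \<and> coprime u (2^m)}"

definition iX :: "nat set \<Rightarrow> nat" where
  "iX X = card (units2 (nX X)) div card (pi2 (nX X) ` X)"

end

theory Submission
  imports Defs "HOL-Number_Theory.Number_Theory"
begin

lemma cong_nat_dvd: "[x = y] (mod (n::nat)) \<longleftrightarrow> (int n) dvd (int x - int y)"
  by (simp add: cong_int_iff[symmetric] cong_iff_dvd_diff)
lemma pow2_sq:
  fixes b q :: nat
  assumes "b = 1 + 2^(w+2)*(2*q+1)"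
  shows "\<exists>q'. b^(2^j) = 1 + 2^(w+2+j)*(2*q'+1)"
proof (induction j)
  case 0 then show ?case using assms by auto
next
  case (Suc j)
  then obtain q' where h: "b^(2^j) = 1 + 2^(w+2+j)*(2*q'+1)" by blast
  have "b^(2^Suc j) = (b^(2^j))^2" by (simp add: power_mult[symmetric] mult.commute)
  also have "\<dots> = 1 + 2^(w+2+Suc j)*(2*(q' + 2^(w+j)*(2*q'+1)^2)+1)"
    unfolding h by (simp add: power2_eq_square algebra_simps power_add)
  finally show ?case by blast
qed

lemma cover:
  fixes b c q y K :: nat
  assumes b: "b = 1 + 2^(w+2)*(2*q+1)" and c: "odd c"
    and y: "[y = c] (mod 2^(w+2))"
  shows "\<exists>k\<ge>K. [c*b^k = y] (mod 2^(w+2+d))"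
proof (induction d)
  case 0
  have "[b = 1] (mod 2^(w+2))" unfolding cong_nat_dvd using b by simp
  then have bK: "[b^K = 1^K] (mod 2^(w+2))" by (rule cong_pow)
  have cK: "[c*b^K = c] (mod 2^(w+2))" using cong_mult[OF cong_refl[of c] bK] by simp
  have "[c*b^K = y] (mod 2^(w+2))" using cong_trans[OF cK cong_sym[OF y]] .
  then show ?case by (intro exI[of _ K]) simp
next
  case (Suc d)
  then obtain k where k: "k \<ge> K" "[c*b^k = y] (mod 2^(w+2+d))" by blast
  define r where "r = c*b^k"
  have bodd: "odd b" using b by simp
  have rodd: "odd r" using c bodd by (simp add: r_def)
  have "(2::int)^(w+2+d) dvd int r - int y" using k(2) unfolding r_def cong_nat_dvd by simp
  then obtain e where e: "int r - int y = 2^(w+2+d) * e" by blast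
  show ?case
  proof (cases "even e")
    case True
    then obtain e' where "e = 2*e'" by blast
    then have "int r - int y = 2^(w+2+Suc d) * e'" using e by simp
    then have "[r = y] (mod 2^(w+2+Suc d))" unfolding cong_nat_dvd by simp
    then show ?thesis using k(1) r_def by blast
  next
    case False
    obtain o' where o: "b^(2^d) = 1 + 2^(w+2+d)*(2*o'+1)" using pow2_sq[OF b] by blast
    have "c*b^(k+2^d) = r*b^(2^d)" by (simp add: r_def power_add)
    also have "\<dots> = r + 2^(w+2+d)*(r*(2*o'+1))" unfolding o by (simp add: algebra_simps)
    finally have eq: "c*b^(k+2^d) = r + 2^(w+2+d)*(r*(2*o'+1))" .
    have "int (c*b^(k+2^d)) - int y = (int r - int y) + 2^(w+2+d)*(int r*(2*int o'+1))"
      unfolding eq by (simp add: algebra_simps)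
    also have "\<dots> = 2^(w+2+d)*(e + int r*(2*int o'+1))"
      unfolding e by (simp add: algebra_simps)
    finally have e2: "int (c*b^(k+2^d)) - int y = 2^(w+2+d)*(e + int r*(2*int o'+1))" .
    have "even (e + int r*(2*int o'+1))" using False rodd by simp
    then obtain e' where "e + int r*(2*int o'+1) = 2*e'" by blast
    with e2 have "int (c*b^(k+2^d)) - int y = 2^(w+2+Suc d) * e'" by simp
    then have "[c*b^(k+2^d) = y] (mod 2^(w+2+Suc d))" unfolding cong_nat_dvd by simp
    then show ?thesis using k(1) by (intro exI[of _ "k+2^d"]) auto
  qed
qed


lemma closure_char:
  fixes a w :: nat and R :: "nat set"
  assumes a2: "a \<ge> 2" and w: "w \<ge> 1" and Rodd: "\<forall>r\<in>R. odd r"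
  and pw: "\<forall>k\<ge>1. a^k mod 2^w \<in> R"
  and cov: "\<And>y M K. y mod 2^w \<in> R \<Longrightarrow> M \<ge> w \<Longrightarrow> (\<exists>k\<ge>K. [a^k = y] (mod 2^M))"
  shows "adic_closure {a^k | k. k\<ge>1} = {y. y\<ge>1 \<and> y mod 2^w \<in> R}"
proof (intro equalityI subsetI)
  fix y assume "y \<in> adic_closure {a^k | k. k\<ge>1}"
  then have y1: "y \<ge> 1" and h: "\<And>x m. x \<ge> 1 \<Longrightarrow> m \<ge> 1 \<Longrightarrow> y \<in> {x + 2^m * k | k. True} \<Longrightarrow>
        (\<exists>s\<in>{a^k | k. k\<ge>1}. s \<in> {x + 2^m * k | k. True})"
    unfolding adic_closure_def by blast+
  have "y \<in> {y + 2^w * k | k. True}" by (intro CollectI exI[of _ 0]) simp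
  from h[OF y1 w this] obtain k j where "k \<ge> 1" "a^k = y + 2^w*j" by blast
  then have "y mod 2^w = a^k mod 2^w" by simp
  with pw \<open>k\<ge>1\<close> y1 show "y \<in> {y. y\<ge>1 \<and> y mod 2^w \<in> R}" by auto
next
  fix y assume "y \<in> {y. y\<ge>1 \<and> y mod 2^w \<in> R}"
  then have y1: "y \<ge> 1" and yR: "y mod 2^w \<in> R" by auto
  have "odd (y mod 2^w)" using yR Rodd by blast
  moreover have d: "(2::nat) dvd 2^w" using w by (cases w) auto
  moreover have "(y mod 2^w) mod 2 = y mod 2" by (rule mod_mod_cancel[OF d])
  ultimately have yodd: "odd y" by (simp add: odd_iff_mod_2_eq_one)
  show "y \<in> adic_closure {a^k | k. k\<ge>1}" unfolding adic_closure_def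
  proof (intro CollectI conjI allI impI y1 yodd)
    fix x m assume x1: "x \<ge> 1" and m1: "m \<ge> 1" and "y \<in> {x + 2^m * k | k. True}"
    then obtain j where yj: "y = x + 2^m*j" by blast
    obtain k where k: "k \<ge> x+1" "[a^k = y] (mod 2^(max m w))"
      using cov[OF yR, of "max m w" "x+1"] by auto
    have "[a^k = y] (mod 2^m)"
      using cong_dvd_modulus_nat[OF k(2)] by (simp add: le_imp_power_dvd)
    then have c: "a^k mod 2^m = x mod 2^m" using yj by (simp add: cong_def)
    have "k < 2^k" by simp
    also have "2^k \<le> a^k" using a2 by (simp add: power_mono)
    finally have "x \<le> a^k" using k(1) by simp
    then have "2^m dvd a^k - x" using c by (simp add: mod_eq_dvd_iff_nat)
    then obtain t where "a^k - x = 2^m*t" by blast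
    then have "a^k = x + 2^m*t" using \<open>x \<le> a^k\<close> by simp
    moreover have "k \<ge> 1" using k(1) by simp
    ultimately show "\<exists>s\<in>{a^k | k. k\<ge>1}. s \<in> {x + 2^m * k | k. True}" by blast
  qed
qed

lemma sat_char:
  assumes "v \<le> n"
  shows "pi2_sat n {y. y\<ge>1 \<and> y mod 2^v \<in> R} = {y. (y::nat)\<ge>1 \<and> y mod 2^v \<in> R}"
proof (intro equalityI subsetI)
  fix y assume "y \<in> pi2_sat n {y. y\<ge>1 \<and> y mod 2^v \<in> R}"
  then obtain x where "y \<ge> 1" "x mod 2^v \<in> R" "y mod 2^n = x mod 2^n"
    unfolding pi2_sat_def pi2_def by auto
  moreover have "2^v dvd (2::nat)^n" using assms by (simp add: le_imp_power_dvd)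
  ultimately have "(y mod 2^n) mod 2^v = (x mod 2^n) mod 2^v" "2^v dvd (2::nat)^n" by simp_all
  then have "y mod 2^v = x mod 2^v" by (simp add: mod_mod_cancel)
  then show "y \<in> {y. y\<ge>1 \<and> y mod 2^v \<in> R}" using \<open>y \<ge> 1\<close> \<open>x mod 2^v \<in> R\<close> by simp
qed (auto simp: pi2_sat_def)

lemma nX_eq:
  assumes "X = pi2_sat n X" "card (pi2 n ` X) \<ge> 3" "n\<ge>1" "\<And>m. m<n \<Longrightarrow> card (pi2 m ` X) < 3"
  shows "nX X = n"
  unfolding nX_def
  by (rule Least_equality) (use assms in \<open>auto simp: not_less[symmetric]\<close>)

lemma card_units2: assumes "n \<ge> 1" shows "card (units2 n) = 2^(n-1)"
proof -
  have "units2 n = totatives (2^n)"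
    using assms by (auto simp: units2_def totatives_def order_le_less intro: Nat.gr0I)
  then show ?thesis using totient_prime_power[of 2 n] assms by (simp add: totient_def)
qed

lemma mod_split2:
  fixes y M N r T :: nat
  assumes "y mod M = r" "r < M" "N = M*T" "T > 0"
  shows "\<exists>j<T. y mod N = r + M*j"
proof -
  define j where "j = (y div M) mod T"
  have y: "y = r + M*(y div M)" using assms(1) by (metis div_mult_mod_eq add.commute mult.commute)
  have "y div M = j + T*((y div M) div T)" by (simp add: j_def)
  then have y2: "y = (r + M*j) + N*((y div M) div T)" using y assms(3)
    by (metis add.assoc distrib_left mult.assoc)
  have "j \<le> T - 1" using assms(4) by (simp add: j_def less_Suc_eq_le[symmetric])
  then have "M*j \<le> M*(T-1)" by simp
  then have "r + M*j < M + M*(T-1)" using assms(2) by linarith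
  also have "M + M*(T-1) = N" using assms(3,4) by (cases T) auto
  finally have lt: "r + M*j < N" .
  have "y mod N = (r + M*j) mod N" using y2 by (metis mod_mult_self2)
  also have "\<dots> = r + M*j" using lt by simp
  finally have "y mod N = r + M*j" .
  moreover have "j < T" using assms(4) by (simp add: j_def)
  ultimately show ?thesis by blast
qed

lemma mod_lin:
  fixes r M k :: nat
  assumes "r < M"
  shows "(r + M*k) mod M = r"
  using assms by (simp only: mod_mult_self2) simp

lemma card4_distinct:
  "a \<noteq> b \<Longrightarrow> a \<noteq> c \<Longrightarrow> a \<noteq> d \<Longrightarrow> b \<noteq> c \<Longrightarrow> b \<noteq> d \<Longrightarrow> c \<noteq> d \<Longrightarrow> card {a,b,c,d} = 4"
  by simp



lemma two_val: "(n::nat) > 0 \<Longrightarrow> \<exists>v u. n = 2^v*u \<and> odd u"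
proof (induction n rule: less_induct)
  case (less n)
  show ?case
  proof (cases "odd n")
    case True then show ?thesis by (intro exI[of _ 0] exI[of _ n]) auto
  next
    case False
    then obtain m where m: "n = 2*m" by blast
    with less.prems have "m < n" "m > 0" by auto
    with less.IH obtain v u where "m = 2^v*u" "odd u" by blast
    with m show ?thesis by (intro exI[of _ "Suc v"] exI[of _ u]) auto
  qed
qed

lemma four_val:
  assumes "(n::nat) > 0" "4 dvd n"
  shows "\<exists>w q. n = 2^(w+2)*(2*q+1)"
proof -
  obtain v u where vu: "n = 2^v*u" "odd u" using two_val assms(1) by blast
  have "v \<ge> 2"
  proof (rule ccontr)
    assume "\<not> v \<ge> 2"
    then have "v = 0 \<or> v = 1" by auto
    then show False
    proof
      assume "v = 0" then have "odd n" using vu by simp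
      moreover have "even n" using assms(2) by (metis dvd_trans even_numeral)
      ultimately show False by simp
    next
      assume "v = 1" then have "n = 2*u" using vu by simp
      then obtain c where "2*u = 4*c" using assms(2) by (auto elim!: dvdE)
      then have "u = 2*c" by simp
      then show False using vu(2) by simp
    qed
  qed
  then obtain w where "v = w+2" by (metis le_add_diff_inverse2)
  moreover obtain q where "u = 2*q+1" using vu(2) oddE by blast
  ultimately show ?thesis using vu by blast
qed



lemma card2: "card {x, y} \<le> 2" by (cases "x = y") auto

lemma case1:
  fixes a w q :: nat
  assumes a: "a = 1 + 2^(w+2)*(2*q+1)"
  defines "X \<equiv> adic_closure {a^k | k. k\<ge>1}"
  shows "X = {1 + 2^(nX X - 2)*k | k. True} \<and> iX X = 2^(nX X - 3)"
proof -
  define P where "P = (2::nat)^(w+2)"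
  have P4: "P \<ge> 4" unfolding P_def using power_increasing[of 2 "w+2" "2::nat"] by simp
  have P3: "(2::nat)^(w+3) = 2*P" "(2::nat)^(w+4) = 4*P" by (simp_all add: P_def power_add)
  have "0 < 2^(w+2)*(2*q+1)" by simp
  then have a2: "a \<ge> 2" using a by linarith
  have aodd: "odd a" using a by simp
  have "a mod 2^(w+2) = 1 mod 2^(w+2)" using a by (simp only: mod_mult_self2)
  then have amod: "a mod 2^(w+2) = 1" using P4 unfolding P_def by simp
  have pw: "\<forall>k\<ge>1. a^k mod 2^(w+2) \<in> {1}"
    using amod by (simp add: power_mod[of a, symmetric])
  have cov: "\<exists>k\<ge>K. [a^k = y] (mod 2^M)" if y: "y mod 2^(w+2) \<in> {1}" and M: "M \<ge> w+2" for y M K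
  proof -
    have "[y = a] (mod 2^(w+2))" using y amod by (simp add: cong_def)
    from cover[OF a aodd this, of K "M - (w+2)"] obtain k where
      k: "k \<ge> K" "[a*a^k = y] (mod 2^(w+2+(M - (w+2))))" by blast
    have e: "w+2+(M - (w+2)) = M" using M by simp
    have "[a*a^k = y] (mod 2^M)" using k(2) unfolding e .
    note k = k(1) this
    then show ?thesis by (intro exI[of _ "Suc k"]) auto
  qed
  have Xc: "X = {y. y\<ge>1 \<and> y mod 2^(w+2) \<in> {1}}"
    unfolding X_def by (rule closure_char[OF a2 _ _ pw cov]) auto
  have img4: "pi2 (w+4) ` X = {1, 1+P, 1+2*P, 1+3*P}"
  proof (intro equalityI subsetI)
    fix z assume "z \<in> pi2 (w+4) ` X"
    then obtain y where y: "y \<in> X" "z = y mod 2^(w+4)" unfolding pi2_def by auto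
    from y(1) Xc have "y mod 2^(w+2) = 1" by auto
    then have "y mod P = 1" by (simp add: P_def)
    from mod_split2[OF this _ _, of "4*P" 4] obtain j where "j < 4" "y mod (4*P) = 1 + P*j"
      using P4 by auto
    note this[folded P3]
    then show "z \<in> {1, 1+P, 1+2*P, 1+3*P}" using y(2)
      by (auto simp: less_Suc_eq numeral_eq_Suc)
  next
    fix z assume z: "z \<in> {1, 1+P, 1+2*P, 1+3*P}"
    have mP: "(1 + P*j) mod P = 1" for j using P4 by (simp only: mod_mult_self2) simp
    have "z mod P = 1" using z mP[of 0] mP[of 1] mP[of 2] mP[of 3] P4 by (auto simp: mult.commute)
    then have "z \<in> X" using Xc P_def z by auto
    moreover have "z < 4*P" using z P4 by auto
    then have "z = pi2 (w+4) z" using P3 by (simp add: pi2_def)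
    ultimately show "z \<in> pi2 (w+4) ` X" by blast
  qed
  have card4: "card (pi2 (w+4) ` X) = 4" unfolding img4 using P4 by simp
  have small: "card (pi2 m ` X) < 3" if "m < w+4" for m
  proof -
    have "pi2 m ` X \<subseteq> {1 mod 2^m, (1+P) mod 2^m}"
    proof
      fix z assume "z \<in> pi2 m ` X"
      then obtain y where y: "y \<in> X" "z = y mod 2^m" unfolding pi2_def by auto
      from y(1) Xc have "y mod 2^(w+2) = 1" by auto
      then have "y mod P = 1" by (simp add: P_def)
      from mod_split2[OF this _ _, of "2*P" 2] obtain j where "j < 2" "y mod (2*P) = 1 + P*j"
        using P4 by auto
      note jj = this[folded P3]
      have dv: "2^m dvd (2::nat)^(w+3)" using that by (simp add: le_imp_power_dvd)
      have "z = (y mod 2^(w+3)) mod 2^m" using y(2) mod_mod_cancel[OF dv] by simp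
      also have "\<dots> = (1 + P*j) mod 2^m" by (simp only: jj(2))
      finally have "z = (1 + P*j) mod 2^m" "j < 2" using jj(1) by auto
      then show "z \<in> {1 mod 2^m, (1+P) mod 2^m}" by (auto simp: less_Suc_eq numeral_eq_Suc)
    qed
    then have "card (pi2 m ` X) \<le> card {1 mod 2^m, (1+P) mod 2^m}" by (rule card_mono[rotated]) simp
    then have "card (pi2 m ` X) \<le> 2" by (meson card2 le_trans)
    then show ?thesis by simp
  qed
  have sat: "X = pi2_sat (w+4) X" using sat_char[of "w+2" "w+4" "{1}"] Xc by simp
  have n: "nX X = w+4" by (rule nX_eq[OF sat]) (use card4 small in auto)
  have "iX X = 2^(w+3) div 4" unfolding iX_def n card4 using card_units2[of "w+4"] by (simp add: add.commute)
  also have "\<dots> = 2^(w+1)" by (simp add: power_add)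
  finally have i: "iX X = 2^(nX X - 3)" using n by simp
  have "X = {1 + 2^(w+2)*k | k. True}"
  proof (intro equalityI subsetI)
    fix y assume "y \<in> X"
    then have "y mod 2^(w+2) = 1" using Xc by auto
    then have "y = 1 + 2^(w+2)*(y div 2^(w+2))" using mult_div_mod_eq[of "2^(w+2)" y] by linarith
    then show "y \<in> {1 + 2^(w+2)*k | k. True}" by blast
  next
    fix y :: nat assume "y \<in> {1 + 2^(w+2)*k | k. True}"
    then obtain k where yk: "y = 1 + 2^(w+2)*k" by blast
    have "1 < (2::nat)^(w+2)" by (rule one_less_power) auto
    then have "(1 + 2^(w+2)*k) mod 2^(w+2) = 1" by (rule mod_lin)
    then show "y \<in> X" using Xc yk by simp
  qed
  then show ?thesis using i n by simp
qed



lemma case2: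
  fixes a w q :: nat
  assumes a: "a + 1 = 2^(w+2)*(2*q+1)"
  defines "X \<equiv> adic_closure {a^k | k. k\<ge>1}"
  shows "X = {1 + 2^(nX X - 1)*k | k. True} \<union> {2^(nX X - 2) - 1 + 2^(nX X - 1)*k | k. True}
     \<and> iX X = 2^(nX X - 3)"
proof -
  define P where "P = (2::nat)^(w+2)"
  have P4: "P \<ge> 4" unfolding P_def using power_increasing[of 2 "w+2" "2::nat"] by simp
  have P3: "(2::nat)^(w+3) = 2*P" "(2::nat)^(w+4) = 4*P" by (simp_all add: P_def power_add)
  have aP: "a = 2*P*q + (P - 1)" using a P4 by (simp add: P_def algebra_simps)
  have a2: "a \<ge> 2" using aP P4 by simp
  have aodd: "odd a" using aP P4 by (simp add: P_def)
  have "a = (P - 1) + (2*P)*q" using aP by simp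
  then have "a mod (2*P) = (P - 1) mod (2*P)" by (simp only: mod_mult_self2)
  then have amod: "a mod (2*P) = P - 1" using P4 by simp
  have Podd: "odd (P - 1)" using P4 by (simp add: P_def)
  define o' where "o' = 2*q+1"
  define t where "t = 2^(w+1)*o'^2 - o'"
  have ot: "o' \<le> 2^(w+1)*o'^2"
  proof -
    have "o' \<le> o'^2" by (simp add: power2_eq_square o'_def)
    also have "\<dots> \<le> 2^(w+1)*o'^2" by simp
    finally show ?thesis .
  qed
  have todd: "odd t" unfolding t_def using ot by (simp add: o'_def)
  have "int (a + 1) = int (2^(w+2)*o')" using a unfolding o'_def by (simp only:)
  then have ia: "int a = 2^(w+2)*int o' - 1" by simp
  have "int (a^2) = (int a)^2" by simp
  also have "\<dots> = (2^(w+2)*int o' - 1)^2" by (simp only: ia)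
  also have "\<dots> = 1 + 2^(w+3)*(2^(w+1)*int o'^2 - int o')"
    by (simp add: power2_eq_square algebra_simps power_add)
  also have "2^(w+1)*int o'^2 - int o' = int t" unfolding t_def using ot by (simp add: of_nat_diff)
  finally have "int (a^2) = int (1 + 2^(w+3)*t)" by simp
  then have a2eq0: "a^2 = 1 + 2^(w+3)*t" by (simp only: of_nat_eq_iff)
  obtain q' where tq: "t = 2*q'+1" using todd oddE by blast
  have e3: "w+1+2 = w+3" by simp
  have a2eq: "a^2 = 1 + 2^((w+1)+2)*(2*q'+1)" unfolding e3 using a2eq0 tq by simp
  have "a^2 = 1 + (2*P)*t" using a2eq0 P3 by simp
  then have "a^2 mod (2*P) = 1" using mod_lin[of 1 "2*P" t] P4 by simp
  then have a2mod: "[a^2 = 1] (mod 2*P)" using P4 by (simp add: cong_def)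
  have a2odd: "odd (a^2)" using aodd by simp
  have pw: "\<forall>k\<ge>1. a^k mod 2^(w+3) \<in> {1, P-1}"
  proof (intro allI impI)
    fix k :: nat assume "k \<ge> 1"
    define j where "j = k div 2"
    have kk: "k = 2*j \<or> k = 2*j+1" unfolding j_def by presburger
    have c1: "[(a^2)^j = 1] (mod 2*P)" using cong_pow[OF a2mod, of j] by simp
    have c2: "[a*(a^2)^j = a*1] (mod 2*P)" using cong_mult[OF cong_refl c1] .
    have e1: "a^(2*j) = (a^2)^j" by (simp only: power_mult)
    have e2: "a^(2*j+1) = a*(a^2)^j" by (simp only: power_mult power_Suc Suc_eq_plus1[symmetric])
    have m1: "(a^2)^j mod (2*P) = 1" using c1 P4 unfolding cong_def by simp
    have m2: "(a*(a^2)^j) mod (2*P) = P - 1" using c2 amod unfolding cong_def by simp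
    from kk show "a^k mod 2^(w+3) \<in> {1, P-1}"
    proof
      assume "k = 2*j"
      then have "a^k mod 2^(w+3) = (a^2)^j mod (2*P)" by (simp only: e1 P3)
      then show ?thesis using m1 by simp
    next
      assume "k = 2*j+1"
      then have "a^k mod 2^(w+3) = (a*(a^2)^j) mod (2*P)" by (simp only: e2 P3)
      then show ?thesis using m2 by simp
    qed
  qed
  have cov: "\<exists>k\<ge>K. [a^k = y] (mod 2^M)" if y: "y mod 2^(w+3) \<in> {1, P-1}" and M: "M \<ge> w+3" for y M K
  proof (cases "y mod 2^(w+3) = 1")
    case True
    have "[y = a^2] (mod 2^(w+1+2))" unfolding e3 P3 using True a2mod P3 by (simp add: cong_def)
    from cover[OF a2eq a2odd this, of K "M - (w+3)"] obtain k where
      k: "k \<ge> K" "[a^2*(a^2)^k = y] (mod 2^(w+1+2+(M - (w+3))))" by blast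
    have e: "w+1+2+(M - (w+3)) = M" using M by simp
    have "[a^2*(a^2)^k = y] (mod 2^M)" using k(2) unfolding e .
    note k = k(1) this
    then show ?thesis by (intro exI[of _ "2*k+2"]) (auto simp: power_mult[symmetric] power_add[symmetric] algebra_simps)
  next
    case False
    then have "y mod 2^(w+3) = P - 1" using y by auto
    then have "[y = a] (mod 2^(w+1+2))" unfolding e3 P3 using amod P3 by (simp add: cong_def)
    from cover[OF a2eq aodd this, of K "M - (w+3)"] obtain k where
      k: "k \<ge> K" "[a*(a^2)^k = y] (mod 2^(w+1+2+(M - (w+3))))" by blast
    have e: "w+1+2+(M - (w+3)) = M" using M by simp
    have "[a*(a^2)^k = y] (mod 2^M)" using k(2) unfolding e .
    note k = k(1) this
    then show ?thesis by (intro exI[of _ "2*k+1"]) (auto simp: power_mult[symmetric] algebra_simps)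
  qed
  have Xc: "X = {y. y\<ge>1 \<and> y mod 2^(w+3) \<in> {1, P-1}}"
    unfolding X_def by (rule closure_char[OF a2 _ _ pw cov]) (use Podd in auto)
  have img4: "pi2 (w+4) ` X = {1, 1+2*P, P-1, P-1+2*P}"
  proof (intro equalityI subsetI)
    fix z assume "z \<in> pi2 (w+4) ` X"
    then obtain y where y: "y \<in> X" "z = y mod 2^(w+4)" unfolding pi2_def by auto
    from y(1) Xc have "y mod 2^(w+3) = 1 \<or> y mod 2^(w+3) = P - 1" by auto
    then show "z \<in> {1, 1+2*P, P-1, P-1+2*P}"
    proof
      assume "y mod 2^(w+3) = 1"
      then have "y mod (2*P) = 1" using P3 by simp
      moreover have "1 < 2*P" using P4 by simp
      moreover have "4*P = 2*P*2" by simp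
      ultimately have "\<exists>j<2. y mod (4*P) = 1 + 2*P*j" by (rule mod_split2) simp
      then obtain j where j: "j < 2" "y mod (4*P) = 1 + 2*P*j" by blast
      have zy: "z = y mod (4*P)" using y(2) P3 by simp
      have "j = 0 \<or> j = 1" using j(1) by auto
      then show ?thesis using zy j(2) by auto
    next
      assume "y mod 2^(w+3) = P - 1"
      then have "y mod (2*P) = P - 1" using P3 by simp
      moreover have "P - 1 < 2*P" using P4 by simp
      moreover have "4*P = 2*P*2" by simp
      ultimately have "\<exists>j<2. y mod (4*P) = P - 1 + 2*P*j" by (rule mod_split2) simp
      then obtain j where j: "j < 2" "y mod (4*P) = P - 1 + 2*P*j" by blast
      have zy: "z = y mod (4*P)" using y(2) P3 by simp
      have "j = 0 \<or> j = 1" using j(1) by auto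
      then show ?thesis using zy j(2) by auto
    qed
  next
    fix z assume z: "z \<in> {1, 1+2*P, P-1, P-1+2*P}"
    have zc: "z = 1 \<or> z = 1+2*P \<or> z = P-1 \<or> z = P-1+2*P" using z by blast
    have f0: "1 mod (2*P) = 1" using P4 by simp
    have f3: "(P-1) mod (2*P) = P-1" using P4 by simp
    have f1: "(1+2*P) mod (2*P) = 1" by (simp only: mod_add_self2 f0)
    have f2: "(P-1+2*P) mod (2*P) = P-1" by (simp only: mod_add_self2 f3)
    have zm: "z mod (2*P) \<in> {1, P-1}" using zc by (elim disjE; simp only: f0 f1 f2 f3 insert_iff simp_thms)
    have "z \<ge> 1" using zc P4 by auto
    then have "z \<in> X" unfolding Xc P3 using zm by simp
    moreover have "z < 4*P" using z P4 by auto
    then have "z = pi2 (w+4) z" using P3 by (simp add: pi2_def)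
    ultimately show "z \<in> pi2 (w+4) ` X" by blast
  qed
  have card4: "card (pi2 (w+4) ` X) = 4" unfolding img4 by (rule card4_distinct) (use P4 in simp_all)
  have small: "card (pi2 m ` X) < 3" if "m < w+4" for m
  proof -
    have "pi2 m ` X \<subseteq> {1 mod 2^m, (P-1) mod 2^m}"
    proof
      fix z assume "z \<in> pi2 m ` X"
      then obtain y where y: "y \<in> X" "z = y mod 2^m" unfolding pi2_def by auto
      from y(1) Xc have "y mod 2^(w+3) = 1 \<or> y mod 2^(w+3) = P - 1" by auto
      moreover have dv: "2^m dvd (2::nat)^(w+3)" using that by (simp add: le_imp_power_dvd)
      have "z = (y mod 2^(w+3)) mod 2^m" using y(2) mod_mod_cancel[OF dv] by simp
      ultimately have "z = 1 mod 2^m \<or> z = (P - 1) mod 2^m" by auto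
      then show "z \<in> {1 mod 2^m, (P-1) mod 2^m}" by auto
    qed
    then have "card (pi2 m ` X) \<le> card {1 mod 2^m, (P-1) mod 2^m}" by (rule card_mono[rotated]) simp
    then have "card (pi2 m ` X) \<le> 2" by (meson card2 le_trans)
    then show ?thesis by simp
  qed
  have sat: "X = pi2_sat (w+4) X" using sat_char[of "w+3" "w+4" "{1, P-1}"] Xc by simp
  have n: "nX X = w+4" by (rule nX_eq[OF sat]) (use card4 small in auto)
  have "iX X = 2^(w+3) div 4" unfolding iX_def n card4 using card_units2[of "w+4"] by (simp add: add.commute)
  also have "\<dots> = 2^(w+1)" by (simp add: power_add)
  finally have i: "iX X = 2^(nX X - 3)" using n by simp
  have "X = {1 + 2*P*k | k. True} \<union> {P - 1 + 2*P*k | k. True}"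
  proof (intro equalityI subsetI)
    fix y assume "y \<in> X"
    then have "y mod (2*P) = 1 \<or> y mod (2*P) = P - 1" using Xc P3 by auto
    then have "y = 1 + 2*P*(y div (2*P)) \<or> y = P - 1 + 2*P*(y div (2*P))"
      using mult_div_mod_eq[of "2*P" y] by linarith
    then show "y \<in> {1 + 2*P*k | k. True} \<union> {P - 1 + 2*P*k | k. True}" by blast
  next
    fix y :: nat assume "y \<in> {1 + 2*P*k | k. True} \<union> {P - 1 + 2*P*k | k. True}"
    then obtain k where yk: "y = 1 + 2*P*k \<or> y = P - 1 + 2*P*k" by blast
    have g1: "(1 + 2*P*k) mod (2*P) = 1" by (rule mod_lin) (use P4 in simp)
    have g2: "(P - 1 + 2*P*k) mod (2*P) = P - 1" by (rule mod_lin) (use P4 in simp)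
    have ym: "y mod (2*P) \<in> {1, P-1}" using yk by (elim disjE; simp only: g1 g2 insert_iff simp_thms)
    have "y \<ge> 1" using yk P4 by auto
    then show "y \<in> X" unfolding Xc P3 using ym by simp
  qed
  moreover have "nX X - 1 = w+3" "nX X - 2 = w+2" using n by auto
  ultimately show ?thesis using i P3 P_def by simp
qed


theorem lemma4p6:
  fixes a :: nat
  assumes "a \<ge> 1"
  defines "X \<equiv> adic_closure {a ^ k | k. k \<ge> 1}"
  shows "(a \<in> {1 + 4 * k | k. k \<ge> 1} \<longrightarrow>
            X = {1 + 2 ^ (nX X - 2) * k | k. True} \<and> iX X = 2 ^ (nX X - 3))
       \<and> (a \<in> {3 + 4 * k | k. k \<ge> 1} \<longrightarrow>
            X = {1 + 2 ^ (nX X - 1) * k | k. True}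
                \<union> {2 ^ (nX X - 2) - 1 + 2 ^ (nX X - 1) * k | k. True}
            \<and> iX X = 2 ^ (nX X - 3))"
proof (rule conjI[OF impI impI])
  assume "a \<in> {1 + 4 * k | k. k \<ge> 1}"
  then obtain k where k: "a = 1 + 4*k" "k \<ge> 1" by blast
  then have "a - 1 > 0" "4 dvd a - 1" by auto
  from four_val[OF this] obtain w q where "a - 1 = 2^(w+2)*(2*q+1)" by blast
  then have "a = 1 + 2^(w+2)*(2*q+1)" using k by simp
  then show "X = {1 + 2 ^ (nX X - 2) * k | k. True} \<and> iX X = 2 ^ (nX X - 3)"
    unfolding X_def by (rule case1)
next
  assume "a \<in> {3 + 4 * k | k. k \<ge> 1}"
  then obtain k where k: "a = 3 + 4*k" "k \<ge> 1" by blast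
  then have "a + 1 > 0" "4 dvd a + 1" by auto
  from four_val[OF this] obtain w q where "a + 1 = 2^(w+2)*(2*q+1)" by blast
  then show "X = {1 + 2 ^ (nX X - 1) * k | k. True}
                \<union> {2 ^ (nX X - 2) - 1 + 2 ^ (nX X - 1) * k | k. True}
            \<and> iX X = 2 ^ (nX X - 3)"
    unfolding X_def by (rule case2)
qed

end
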